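(* Let $D$ be a chain BN on $X_1,\dots,X_n$ with all conditional probabilities in $(0,1)$, let $f(x)=x_n$, and let $D_{k,\mu}=\mu_{k,1}-\mu_{k,0}$ and $D_{k,\sigma}=\sigma_{k,1}-\sigma_{k,0}$ (signed). Then $$\sum_{S\subseteq[n]}\hat f_S=\sum_{k=1}^{n}(\mu_{k,0}+\sigma_{k,0})\prod_{\ell=k+1}^{n}(D_{\ell,\mu}+D_{\ell,\sigma}).$$
   Context: A chain BN on $X_1,\dots,X_n$ has $\operatorname{pa}(1)=\emptyset$, $\operatorname{pa}(i)=\{i-1\}$ for $i\ge2$; $\mu_{i,b}=P(X_i=1\mid X_{i-1}=b)$, $\sigma_{i,b}=\sqrt{\mu_{i,b}(1-\mu_{i,b})}$ for $i\ge2$, $b\in\{0,1\}$; for the root, $\mu_{1,0}=\mu_{1,1}=P(X_1=1)$ and $\sigma_{1,0}=\sigma_{1,1}=\sqrt{\mu_{1,0}(1-\mu_{1,0})}$. The BN-induced basis is $\phi_i(x)=(x_i-\mu_{i,x_{i-1}})/\sigma_{i,x_{i-1}}$ (root: $(x_1-\mu_{1,0})/\sigma_{1,0}$), $\phi_S=\prod_{i\in S}\phi_i$, and $\hat f_S=\mathbb{E}_D[f(X)\phi_S(X)]$. *)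

theory Defs
  imports Complex_Main "HOL-Library.FuncSet"
begin

text \<open>An assignment is a function x :: nat => nat with x i in {0,1} for i in {1..n}
  (extensional: x i = undefined outside {1..n}).
  mu i b = P(X_i = 1 | X_{i-1} = b) for i >= 2; for the root, mu 1 0 = mu 1 1 = P(X_1 = 1).\<close>

definition assignments :: "nat \<Rightarrow> (nat \<Rightarrow> nat) set" where
  "assignments n = PiE {1..n} (\<lambda>_. {0, 1})"

text \<open>Value of the parent of node i (root: we use index 0, as mu 1 0 = mu 1 1).\<close>
definition parent_val :: "(nat \<Rightarrow> nat) \<Rightarrow> nat \<Rightarrow> nat" where
  "parent_val x i = (if i = 1 then 0 else x (i - 1))"

definition chain_prob :: "nat \<Rightarrow> (nat \<Rightarrow> nat \<Rightarrow> real) \<Rightarrow> (nat \<Rightarrow> nat) \<Rightarrow> real" where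
  "chain_prob n mu x =
     (\<Prod>i\<in>{1..n}. if x i = 1 then mu i (parent_val x i) else 1 - mu i (parent_val x i))"

definition sig :: "(nat \<Rightarrow> nat \<Rightarrow> real) \<Rightarrow> nat \<Rightarrow> nat \<Rightarrow> real" where
  "sig mu i b = sqrt (mu i b * (1 - mu i b))"

definition phi :: "(nat \<Rightarrow> nat \<Rightarrow> real) \<Rightarrow> nat \<Rightarrow> (nat \<Rightarrow> nat) \<Rightarrow> real" where
  "phi mu i x = (real (x i) - mu i (parent_val x i)) / sig mu i (parent_val x i)"

definition phiS :: "(nat \<Rightarrow> nat \<Rightarrow> real) \<Rightarrow> nat set \<Rightarrow> (nat \<Rightarrow> nat) \<Rightarrow> real" where
  "phiS mu S x = (\<Prod>i\<in>S. phi mu i x)"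

definition fourier_coeff ::
  "nat \<Rightarrow> (nat \<Rightarrow> nat \<Rightarrow> real) \<Rightarrow> ((nat \<Rightarrow> nat) \<Rightarrow> real) \<Rightarrow> nat set \<Rightarrow> real" where
  "fourier_coeff n mu f S = (\<Sum>x\<in>assignments n. chain_prob n mu x * f x * phiS mu S x)"

end

theory Submission
  imports Defs
begin

definition Tm :: "(nat \<Rightarrow> nat \<Rightarrow> nat \<Rightarrow> real) \<Rightarrow> nat \<Rightarrow> (nat \<Rightarrow> real) \<Rightarrow> real" where
  "Tm F m h = (\<Sum>x\<in>assignments m. (\<Prod>i\<in>{1..m}. F i (parent_val x i) (x i)) * h (parent_val x (Suc m)))"

lemma pv_upd: "i \<le> m \<Longrightarrow> parent_val (x(Suc m := a)) i = parent_val x i"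
  by (auto simp: parent_val_def)

lemma pv_upd2: "parent_val (x(Suc m := a)) (Suc (Suc m)) = a"
  by (auto simp: parent_val_def)

lemma Tm_step:
  "Tm F (Suc m) h = Tm F m (\<lambda>b. \<Sum>a\<in>{0,1}. F (Suc m) b a * h a)"
proof -
  have A: "assignments (Suc m) = (\<lambda>(y, g). g(Suc m := y)) ` ({0,1} \<times> assignments m)"
    unfolding assignments_def
    by (metis PiE_insert_eq Suc_eq_plus1 atLeastAtMostSuc_conv le_add2)
  have inj: "inj_on (\<lambda>(y, g). g(Suc m := y)) ({0::nat,1} \<times> assignments m)"
    unfolding assignments_def using inj_combinator[of "Suc m" "{1..m}" "\<lambda>_. {0::nat,1}"] by simp
  have I: "{1..Suc m} = insert (Suc m) {1..m}" by auto
  have "Tm F (Suc m) h = (\<Sum>(a, x)\<in>{0,1} \<times> assignments m.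
      (\<Prod>i\<in>{1..Suc m}. F i (parent_val (x(Suc m := a)) i) ((x(Suc m := a)) i)) *
       h (parent_val (x(Suc m := a)) (Suc (Suc m))))"
    unfolding Tm_def A by (subst sum.reindex[OF inj]) (simp add: case_prod_unfold)
  also have "\<dots> = (\<Sum>(a, x)\<in>{0,1} \<times> assignments m.
      (\<Prod>i\<in>{1..m}. F i (parent_val x i) (x i)) * (F (Suc m) (parent_val x (Suc m)) a * h a))"
  proof (rule sum.cong[OF refl], clarify)
    fix a x
    have "(\<Prod>i\<in>{1..m}. F i (parent_val (x(Suc m := a)) i) ((x(Suc m := a)) i))
        = (\<Prod>i\<in>{1..m}. F i (parent_val x i) (x i))"
      by (rule prod.cong) (auto simp: pv_upd)
    moreover have "parent_val (x(Suc m := a)) (Suc m) = parent_val x (Suc m)"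
      by (simp add: parent_val_def)
    ultimately show "(\<Prod>i\<in>{1..Suc m}. F i (parent_val (x(Suc m := a)) i) ((x(Suc m := a)) i)) *
       h (parent_val (x(Suc m := a)) (Suc (Suc m))) =
      (\<Prod>i\<in>{1..m}. F i (parent_val x i) (x i)) * (F (Suc m) (parent_val x (Suc m)) a * h a)"
      unfolding I by (simp add: pv_upd2 mult_ac)
  qed
  also have "\<dots> = Tm F m (\<lambda>b. \<Sum>a\<in>{0,1}. F (Suc m) b a * h a)"
    unfolding Tm_def sum.cartesian_product[symmetric]
    by (subst sum.swap) (simp add: sum_distrib_left distrib_left)
  finally show ?thesis .
qed

lemma assign_vals: "x \<in> assignments m \<Longrightarrow> parent_val x (Suc m) \<in> {0,1}"
  by (auto simp: assignments_def parent_val_def PiE_def Pi_def)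

lemma Tm_cong: "(\<And>b. b \<in> {0,1} \<Longrightarrow> h b = g b) \<Longrightarrow> Tm F m h = Tm F m g"
  unfolding Tm_def by (rule sum.cong[OF refl]) (metis assign_vals)

lemma Tm_affine:
  fixes c :: "nat \<Rightarrow> nat \<Rightarrow> real"
  assumes "m \<le> n"
    and S1: "\<And>k b. k \<in> {1..n} \<Longrightarrow> b \<in> {0,1} \<Longrightarrow> (\<Sum>a\<in>{0,1}. F k b a) = 1"
    and S2: "\<And>k b. k \<in> {1..n} \<Longrightarrow> b \<in> {0,1} \<Longrightarrow> (\<Sum>a\<in>{0,1}. F k b a * real a) = c k b"
  shows "Tm F m (\<lambda>a. p + q * real a) =
     p + q * (\<Sum>k=1..m. c k 0 * (\<Prod>l=k+1..m. c l 1 - c l 0))"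
  using assms(1)
proof (induction m arbitrary: p q)
  case 0
  have "assignments 0 = {\<lambda>_. undefined}" by (simp add: assignments_def)
  then show ?case by (simp add: Tm_def parent_val_def)
next
  case (Suc m)
  let ?D = "c (Suc m) 1 - c (Suc m) 0"
  have "Tm F (Suc m) (\<lambda>a. p + q * real a) = Tm F m (\<lambda>b. (p + q * c (Suc m) 0) + (q * ?D) * real b)"
    unfolding Tm_step
  proof (rule Tm_cong)
    fix b :: nat assume b: "b \<in> {0,1}"
    have k: "Suc m \<in> {1..n}" using Suc.prems by auto
    have "(\<Sum>a\<in>{0,1}. F (Suc m) b a * (p + q * real a)) =
       p * (\<Sum>a\<in>{0,1}. F (Suc m) b a) + q * (\<Sum>a\<in>{0,1}. F (Suc m) b a * real a)"
      by (simp add: algebra_simps)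
    also have "\<dots> = p + q * c (Suc m) b" using S1[OF k b] S2[OF k b] by simp
    also have "\<dots> = (p + q * c (Suc m) 0) + (q * ?D) * real b" using b by (auto simp: algebra_simps)
    finally show "(\<Sum>a\<in>{0,1}. F (Suc m) b a * (p + q * real a)) = (p + q * c (Suc m) 0) + (q * ?D) * real b" .
  qed
  also have "\<dots> = (p + q * c (Suc m) 0) + (q * ?D) * (\<Sum>k=1..m. c k 0 * (\<Prod>l=k+1..m. c l 1 - c l 0))"
    using Suc by simp
  also have "\<dots> = p + q * (\<Sum>k=1..Suc m. c k 0 * (\<Prod>l=k+1..Suc m. c l 1 - c l 0))"
  proof -
    have "(\<Sum>k=1..Suc m. c k 0 * (\<Prod>l=k+1..Suc m. c l 1 - c l 0))
       = (\<Sum>k=1..m. c k 0 * (\<Prod>l=k+1..Suc m. c l 1 - c l 0)) + c (Suc m) 0"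
      by simp
    also have "(\<Sum>k=1..m. c k 0 * (\<Prod>l=k+1..Suc m. c l 1 - c l 0))
       = (\<Sum>k=1..m. c k 0 * (\<Prod>l=k+1..m. c l 1 - c l 0) * ?D)"
    proof (rule sum.cong[OF refl])
      fix k assume "k \<in> {1..m}"
      then have "{k+1..Suc m} = insert (Suc m) {k+1..m}" by auto
      then show "c k 0 * (\<Prod>l=k+1..Suc m. c l 1 - c l 0) = c k 0 * (\<Prod>l=k+1..m. c l 1 - c l 0) * ?D"
        by (simp add: mult_ac)
    qed
    finally show ?thesis by (simp add: sum_distrib_left sum_distrib_right algebra_simps)
  qed
  finally show ?case .
qed


lemma sig_facts:
  assumes "0 < m" "m < (1::real)"
  shows "sqrt (m * (1 - m)) > 0" "sqrt (m * (1 - m)) * sqrt (m * (1 - m)) = m * (1 - m)"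
  using assms by (auto simp: real_sqrt_mult_self)

lemma F_vals:
  assumes "0 < m" "m < (1::real)"
  defines "s \<equiv> sqrt (m * (1 - m))"
  shows "m * ((1 - m) / s + 1) = m + s"
    and "(1 - m) * ((0 - m) / s + 1) + (m + s) = 1"
proof -
  have s: "s > 0" "s * s = m * (1 - m)" using sig_facts[OF assms(1,2)] s_def by auto
  show "m * ((1 - m) / s + 1) = m + s"
    using s by (simp add: field_simps)
  show "(1 - m) * ((0 - m) / s + 1) + (m + s) = 1"
    using s by (simp add: field_simps)
qed

theorem mainTheorem11:
  fixes n :: nat and mu :: "nat \<Rightarrow> nat \<Rightarrow> real"
  assumes "n \<ge> 1"
    and "mu 1 0 = mu 1 1"
    and "\<And>i b. i \<in> {1..n} \<Longrightarrow> b \<in> {0, 1} \<Longrightarrow> 0 < mu i b \<and> mu i b < 1"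
  shows "(\<Sum>S\<in>Pow {1..n}. fourier_coeff n mu (\<lambda>x. real (x n)) S)
       = (\<Sum>k=1..n. (mu k 0 + sig mu k 0) *
            (\<Prod>l=k+1..n. (mu l 1 - mu l 0) + (sig mu l 1 - sig mu l 0)))"
proof -
  define F where "F i b a = (if a = 1 then mu i b else 1 - mu i b) *
      ((real a - mu i b) / sig mu i b + 1)" for i b a
  define c where "c k b = mu k b + sig mu k b" for k b
  have "(\<Sum>S\<in>Pow {1..n}. fourier_coeff n mu (\<lambda>x. real (x n)) S)
      = (\<Sum>x\<in>assignments n. chain_prob n mu x * real (x n) * (\<Sum>S\<in>Pow {1..n}. phiS mu S x))"
    unfolding fourier_coeff_def by (subst sum.swap) (simp add: sum_distrib_left)
  also have "\<dots> = (\<Sum>x\<in>assignments n. chain_prob n mu x * real (x n) * (\<Prod>i\<in>{1..n}. phi mu i x + 1))"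
    by (simp add: prod_add phiS_def)
  also have "\<dots> = Tm F n (\<lambda>a. 0 + 1 * real a)"
    unfolding Tm_def
  proof (rule sum.cong[OF refl])
    fix x
    have "parent_val x (Suc n) = x n" using assms(1) by (simp add: parent_val_def)
    moreover have "chain_prob n mu x * (\<Prod>i\<in>{1..n}. phi mu i x + 1) = (\<Prod>i\<in>{1..n}. F i (parent_val x i) (x i))"
      unfolding chain_prob_def prod.distrib[symmetric] by (rule prod.cong) (auto simp: F_def phi_def)
    ultimately show "chain_prob n mu x * real (x n) * (\<Prod>i\<in>{1..n}. phi mu i x + 1) =
        (\<Prod>i\<in>{1..n}. F i (parent_val x i) (x i)) * (0 + 1 * real (parent_val x (Suc n)))"
      by (simp add: mult_ac)
  qed
  also have "\<dots> = 0 + 1 * (\<Sum>k=1..n. c k 0 * (\<Prod>l=k+1..n. c l 1 - c l 0))"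
  proof (rule Tm_affine[of n n])
    fix k b assume k: "k \<in> {1..n}" and b: "b \<in> {0::nat,1}"
    have m: "0 < mu k b" "mu k b < 1" using assms(3)[OF k b] by auto
    note fv = F_vals[OF m]
    show "(\<Sum>a\<in>{0,1}. F k b a) = 1"
      using fv by (simp add: F_def sig_def)
    show "(\<Sum>a\<in>{0,1}. F k b a * real a) = c k b"
      using fv by (simp add: F_def sig_def c_def)
  qed simp
  also have "\<dots> = (\<Sum>k=1..n. (mu k 0 + sig mu k 0) *
            (\<Prod>l=k+1..n. (mu l 1 - mu l 0) + (sig mu l 1 - sig mu l 0)))"
    by (simp add: c_def algebra_simps)
  finally show ?thesis .
qed

end
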